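(* Let $n \ge 3$, let $m \ge 1$ be odd, and let $a,b \in \mathbb{Z}/m$ with $a^2\equiv b^2\equiv 1\bmod m$. Then $Q_{2^n m}\cong C_m\rtimes_{(a,b)} Q_{2^n}$ if and only if $(a,b)\equiv(1,-1)$, $(-1,1)$ or $(-1,-1) \bmod m$ in the case $n=3$, and $(a,b) \equiv (1,-1) \bmod m$ in the case $n\ge 4$.
   Context: $Q_{4k}=\langle x,y\mid x^k=y^2, yxy^{-1}=x^{-1}\rangle$. $C_m\rtimes_{(a,b)}Q_{2^n}$ is the semidirect product in which the generators $x,y$ of $Q_{2^n} = \langle x,y\mid x^{2^{n-2}}=y^2, yxy^{-1}=x^{-1}\rangle$ act on a generator $u$ of $C_m$ by $u\mapsto u^a$ and $u\mapsto u^b$ respectively. *)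

theory Defs
  imports "HOL-Algebra.Group" "HOL-Number_Theory.Cong"
begin

text \<open>Concrete model of the dicyclic / generalized quaternion group
  Q_{4k} = < x, y | x^k = y^2, y x y^-1 = x^-1 > (k >= 1), of order 4k.
  The element (i, j) with 0 <= i < 2k, 0 <= j < 2 stands for x^i y^j.
  Multiplication: x^i1 y^j1 x^i2 y^j2 = x^(i1 + (-1)^j1 i2 + [j1=j2=1] k) y^(j1+j2 mod 2).\<close>

definition Qmult :: "int \<Rightarrow> int \<times> int \<Rightarrow> int \<times> int \<Rightarrow> int \<times> int" where
  "Qmult k p q =
     ((fst p + (if snd p = 0 then fst q else - fst q)
        + (if snd p = 1 \<and> snd q = 1 then k else 0)) mod (2*k),
      (snd p + snd q) mod 2)"

definition Qgrp :: "int \<Rightarrow> (int \<times> int) monoid" where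
  "Qgrp k = \<lparr> carrier = {0..<2*k} \<times> {0..<2}, monoid.mult = Qmult k, monoid.one = (0, 0) \<rparr>"

text \<open>Q_{2^n} is Qgrp (2^(n-2)) and Q_{2^n m} is Qgrp (2^(n-2) m).\<close>

text \<open>Image of x^i y^j under the action on C_m = Z/m given by x |-> (u |-> u^a),
  y |-> (u |-> u^b): multiplication by a^i b^j on exponents of u.\<close>

definition qact :: "int \<Rightarrow> int \<Rightarrow> int \<times> int \<Rightarrow> int" where
  "qact a b q = a ^ nat (fst q) * b ^ nat (snd q)"

text \<open>The semidirect product C_m \<rtimes>_(a,b) Q_{2^n}: elements (e, q) stand for u^e q,
  with (u^e1, q1)(u^e2, q2) = (u^e1 * q1(u^e2), q1 q2).\<close>

definition SDmult :: "int \<Rightarrow> nat \<Rightarrow> int \<Rightarrow> int \<Rightarrow>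
    int \<times> (int \<times> int) \<Rightarrow> int \<times> (int \<times> int) \<Rightarrow> int \<times> (int \<times> int)" where
  "SDmult m n a b s t =
     ((fst s + qact a b (snd s) * fst t) mod m, Qmult (2 ^ (n - 2)) (snd s) (snd t))"

definition SDgrp :: "int \<Rightarrow> nat \<Rightarrow> int \<Rightarrow> int \<Rightarrow> (int \<times> (int \<times> int)) monoid" where
  "SDgrp m n a b = \<lparr> carrier = {0..<m} \<times> carrier (Qgrp (2 ^ (n - 2))),
     monoid.mult = SDmult m n a b, monoid.one = (0, (0, 0)) \<rparr>"

end

theory Submission
  imports Defs
begin


lemma Q_closed: "(K::int) > 0 \<Longrightarrow> Qmult K p q \<in> {0..<2*K} \<times> {0..<2}"
  by (simp add: Qmult_def)

lemma Q_p5: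
  assumes "(K::int) > 0" "0 \<le> i" "i < 2*K"
  shows "Qmult K (Qmult K (Qmult K (Qmult K (i,1) (i,1)) (i,1)) (i,1)) (i,1) = (i,1)"
proof -
  have "Qmult K (i,1) (i,1) = (K,0)" using assms by (simp add: Qmult_def)
  moreover have "Qmult K (K,0) (i,1) = ((K+i) mod (2*K),1)" by (simp add: Qmult_def)
  moreover have "Qmult K ((K+i) mod (2*K),1) (i,1) = (0,0)"
  proof -
    have "((K+i) mod (2*K) - i + K) mod (2*K) = ((K+i) - i + K) mod (2*K)"
      by (metis mod_add_left_eq mod_diff_left_eq)
    then have "((K+i) mod (2*K) + - i + K) mod (2*K) = 0" by simp
    then show ?thesis by (simp add: Qmult_def)
  qed
  moreover have "Qmult K (0,0) (i,1) = (i,1)" using assms by (simp add: Qmult_def)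
  ultimately show ?thesis by simp
qed

lemma Q_dich:
  assumes "(K::int) > 0" "0 \<le> s" "s < 2*K" "h \<in> {0..<2*K} \<times> {0..<2}"
  shows "Qmult K h (s,0) = Qmult K (s,0) h \<or> Qmult K (Qmult K (s,0) h) (s,0) = h"
proof -
  obtain i j where h0: "h = (i,j)" by (cases h)
  then have h: "h = (i,j)" "0 \<le> i" "i < 2*K" "j = 0 \<or> j = 1" using assms(4) by auto
  show ?thesis
  proof (cases "j = 0")
    case True then show ?thesis using h by (simp add: Qmult_def add.commute)
  next
    case False
    then have "j = 1" using h by auto
    have "((s + i) mod (2 * K) + - s) mod (2*K) = (s + i - s) mod (2*K)" by (simp add: mod_simps)
    then show ?thesis using h \<open>j = 1\<close> by (simp add: Qmult_def)
  qed
qed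

lemma Q_A:
  assumes "(K::int) > 0" "0 \<le> s" "s < 2*K" "Qmult K (0,1) (s,0) = Qmult K (s,0) (0,1)"
  shows "Qmult K (Qmult K (s,0) (s,0)) (s,0) = (s,0)"
proof -
  have "(-s) mod (2*K) = s" using assms by (simp add: Qmult_def)
  then have "(-s) mod (2*K) = s mod (2*K)" using assms by simp
  then have "(2*K) dvd (-s - s)" by (simp only: mod_eq_dvd_iff)
  moreover have "-s - s = -(2*s)" by simp
  ultimately have "(2*K) dvd (2*s)" by (simp only: dvd_minus_iff)
  then have "((s+s) mod (2*K) + s) mod (2*K) = s mod (2*K)"
    by (simp add: mod_simps mult_2 [symmetric] dvd_eq_mod_eq_0)
  then show ?thesis using assms by (simp add: Qmult_def)
qed

lemma Q_B:
  assumes "(K::int) > 0" "0 \<le> s" "s < 2*K" "0 \<le> i" "i < 2*K"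
    "Qmult K (Qmult K (s,0) (i,0)) (s,0) = (i,0)"
  shows "Qmult K (Qmult K (s,0) (s,0)) (s,0) = (s,0)"
proof -
  have "((s+i) mod (2*K) + s) mod (2*K) = i" using assms by (simp add: Qmult_def)
  then have "(s+i+s) mod (2*K) = i mod (2*K)" using assms by (simp add: mod_simps)
  then have "(2*K) dvd (2*s)" by (simp add: mod_eq_dvd_iff)
  then have "((s+s) mod (2*K) + s) mod (2*K) = s mod (2*K)"
    by (simp add: mod_simps mult_2 [symmetric] dvd_eq_mod_eq_0)
  then show ?thesis using assms by (simp add: Qmult_def)
qed




lemma fwd:
  fixes n :: nat and m a b :: int
  assumes n3: "n \<ge> 3" and m1: "m > 1" and odd: "odd m"
    and iso: "\<phi> \<in> iso (Qgrp (2^(n-2)*m)) (SDgrp m n a b)"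
  shows "(a mod m = 1 \<or> (1+a) mod m = 0) \<and> (b mod m = 1 \<or> (1+b) mod m = 0)
     \<and> \<not>(a mod m = 1 \<and> b mod m = 1) \<and> (n \<ge> 4 \<longrightarrow> (1+a) mod m \<noteq> 0)"
proof -
  define k where "k = (2::int)^(n-2)"
  define K where "K = k*m"
  have "(2::int)^1 \<le> 2^(n-2)" by (rule power_increasing) (use n3 in auto)
  then have k2: "k \<ge> 2" by (simp add: k_def)
  have Kpos: "K > 0" using k2 m1 by (simp add: K_def)
  let ?Q = "Qgrp K" let ?G = "SDgrp m n a b"
  have cQ: "carrier ?Q = {0..<2*K} \<times> {0..<2}" by (simp add: Qgrp_def)
  have cG: "carrier ?G = {0..<m} \<times> ({0..<2*k} \<times> {0..<2})" by (simp add: SDgrp_def Qgrp_def k_def)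
  have iso': "\<phi> \<in> iso ?Q ?G" using iso by (simp add: K_def k_def)
  have hom: "\<And>u v. u \<in> carrier ?Q \<Longrightarrow> v \<in> carrier ?Q \<Longrightarrow> \<phi> (Qmult K u v) = SDmult m n a b (\<phi> u) (\<phi> v)"
  proof -
    fix u v assume uv: "u \<in> carrier ?Q" "v \<in> carrier ?Q"
    have "\<phi> \<in> hom ?Q ?G" using iso' by (simp add: iso_def)
    from hom_mult[OF this uv] show "\<phi> (Qmult K u v) = SDmult m n a b (\<phi> u) (\<phi> v)"
      by (simp add: Qgrp_def SDgrp_def)
  qed
  have img: "\<phi> ` carrier ?Q = carrier ?G" and inj: "inj_on \<phi> (carrier ?Q)"
    using iso' by (auto simp: iso_def bij_betw_def)
  have SDk: "\<And>s t. SDmult m n a b s t = ((fst s + qact a b (snd s) * fst t) mod m, Qmult k (snd s) (snd t))"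
    by (simp add: SDmult_def k_def)
  have closed: "\<And>u v. Qmult K u v \<in> carrier ?Q" using Q_closed Kpos cQ by simp
  define c where "c = (1::int, (0::int, 0::int))"
  have cG_in: "c \<in> carrier ?G" using m1 k2 by (simp add: c_def cG)
  obtain w where w: "w \<in> carrier ?Q" "\<phi> w = c" using img cG_in by (metis imageE)
  have m35: "m = 3 \<or> m = 5 \<or> m \<ge> 7" using m1 odd by presburger
  have c3: "SDmult m n a b (SDmult m n a b c c) c \<noteq> c"
  proof -
    have "(3::int) mod m \<noteq> 1" using m35 by auto
    then show ?thesis using k2 m1 by (simp add: SDk c_def qact_def Qmult_def mod_simps)
  qed
  have c5: "SDmult m n a b (SDmult m n a b (SDmult m n a b (SDmult m n a b c c) c) c) c \<noteq> c"
  proof -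
    have "(5::int) mod m \<noteq> 1" using m35 by auto
    then show ?thesis using k2 m1 by (simp add: SDk c_def qact_def Qmult_def mod_simps)
  qed
  have sw: "snd w = 0"
  proof (rule ccontr)
    assume "snd w \<noteq> 0"
    then obtain i where wi: "w = (i,1)" "0\<le>i" "i<2*K" using w cQ by (cases w) auto
    then have "Qmult K (Qmult K (Qmult K (Qmult K w w) w) w) w = w" using Q_p5 Kpos by simp
    then have "\<phi> (Qmult K (Qmult K (Qmult K (Qmult K w w) w) w) w) = \<phi> w" by simp
    then show False using c5 by (simp add: hom closed w)
  qed
  then obtain s where ws: "w = (s,0)" "0 \<le> s" "s < 2*K" using w cQ by (cases w) auto
  define X where "X = (0::int, (1::int, 0::int))"
  define Y where "Y = (0::int, (0::int, 1::int))"
  have XG: "X \<in> carrier ?G" using m1 k2 by (simp add: X_def cG)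
  have YG: "Y \<in> carrier ?G" using m1 k2 by (simp add: Y_def cG)
  obtain hX where hX: "hX \<in> carrier ?Q" "\<phi> hX = X" using img XG by (metis imageE)
  obtain hY where hY: "hY \<in> carrier ?Q" "\<phi> hY = Y" using img YG by (metis imageE)
  have dichG: "SDmult m n a b g c = SDmult m n a b c g \<or> SDmult m n a b (SDmult m n a b c g) c = g"
    if "h \<in> carrier ?Q" "\<phi> h = g" for h g
  proof -
    have "Qmult K h w = Qmult K w h \<or> Qmult K (Qmult K w h) w = h"
      using Q_dich[of K s h] Kpos ws that cQ by simp
    then show ?thesis
    proof
      assume "Qmult K h w = Qmult K w h"
      then have "\<phi> (Qmult K h w) = \<phi> (Qmult K w h)" by simp
      then show ?thesis using that w hom by simp
    next
      assume "Qmult K (Qmult K w h) w = h"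
      then have "\<phi> (Qmult K (Qmult K w h) w) = \<phi> h" by simp
      then show ?thesis using that w hom closed by simp
    qed
  qed
  have A: "a mod m = 1 \<or> (1+a) mod m = 0"
    using dichG[OF hX] k2 m1 by (simp add: SDk c_def X_def qact_def Qmult_def mod_simps add.commute)
  have B: "b mod m = 1 \<or> (1+b) mod m = 0"
    using dichG[OF hY] k2 m1 by (simp add: SDk c_def Y_def qact_def Qmult_def mod_simps add.commute)
  have C: "\<not>(a mod m = 1 \<and> b mod m = 1)"
  proof
    assume ab: "a mod m = 1 \<and> b mod m = 1"
    have central: "SDmult m n a b c g = SDmult m n a b g c" if "g \<in> carrier ?G" for g
    proof -
      obtain e i j where g0: "g = (e,(i,j))" by (cases g) auto
      then have g1: "0 \<le> e" "e < m" "0 \<le> i" "i < 2*k" "0 \<le> j" "j < 2" using that cG by auto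
      then have "j = 0 \<or> j = 1" by arith
      note g = g0 g1 this
      have "(a ^ nat i * b ^ nat j) mod m = ((a mod m) ^ nat i * (b mod m) ^ nat j) mod m"
        by (metis mod_mult_eq power_mod)
      also have "\<dots> = 1" using ab m1 by simp
      finally have t: "(a ^ nat i * b ^ nat j) mod m = 1" .
      have "(e + a ^ nat i * b ^ nat j) mod m = (e + (a ^ nat i * b ^ nat j) mod m) mod m"
        by (simp add: mod_simps)
      then have "(e + a ^ nat i * b ^ nat j) mod m = (1 + e) mod m" using t by (simp add: add.commute)
      then show ?thesis using g m1 k2 by (auto simp: SDk c_def qact_def Qmult_def)
    qed
    have h01: "(0::int,1::int) \<in> carrier ?Q" using Kpos cQ by simp
    have "\<phi> (0,1) \<in> carrier ?G" using img h01 by blast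
    then have "\<phi> (Qmult K (0,1) w) = \<phi> (Qmult K w (0,1))"
      using hom[OF h01 w(1)] hom[OF w(1) h01] central[of "\<phi> (0,1)"] w by simp
    then have "Qmult K (0,1) w = Qmult K w (0,1)" using inj_onD[OF inj _ closed closed] by blast
    then have "Qmult K (Qmult K w w) w = w" using Q_A[of K s] Kpos ws by simp
    then have "\<phi> (Qmult K (Qmult K w w) w) = \<phi> w" by simp
    then show False using c3 by (simp add: hom closed w)
  qed
  have D: "(1+a) mod m \<noteq> 0" if n4: "n \<ge> 4"
  proof
    assume a1: "(1+a) mod m = 0"
    have "(2::int)^2 \<le> 2^(n-2)" by (rule power_increasing) (use n4 in auto)
    then have k4: "k \<ge> 4" by (simp add: k_def)
    have "SDmult m n a b (SDmult m n a b c X) c = X"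
      using a1 k2 m1 by (simp add: SDk c_def X_def qact_def Qmult_def)
    moreover have "\<phi> (Qmult K (Qmult K w hX) w) = SDmult m n a b (SDmult m n a b (\<phi> w) (\<phi> hX)) (\<phi> w)"
      using hom closed w(1) hX(1) by simp
    ultimately have "\<phi> (Qmult K (Qmult K w hX) w) = \<phi> hX" using w hX by simp
    then have inv: "Qmult K (Qmult K w hX) w = hX" using inj_onD[OF inj _ closed hX(1)] by blast
    show False
    proof (cases "snd hX = 0")
      case True
      then obtain i where "hX = (i,0)" "0 \<le> i" "i < 2*K" using hX cQ by (cases hX) auto
      then have "Qmult K (Qmult K w w) w = w" using Q_B[of K s i] Kpos ws inv by simp
      then have "\<phi> (Qmult K (Qmult K w w) w) = \<phi> w" by simp
      then show False using c3 by (simp add: hom closed w)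
    next
      case False
      then obtain i where wi: "hX = (i,1)" "0\<le>i" "i<2*K" using hX cQ by (cases hX) auto
      then have "Qmult K (Qmult K (Qmult K (Qmult K hX hX) hX) hX) hX = hX" using Q_p5 Kpos by simp
      then have "\<phi> (Qmult K (Qmult K (Qmult K (Qmult K hX hX) hX) hX) hX) = \<phi> hX" by simp
      then have "SDmult m n a b (SDmult m n a b (SDmult m n a b (SDmult m n a b X X) X) X) X = X"
        by (simp add: hom closed hX)
      moreover have "(2::int) mod (2*k) = 2" "(3::int) mod (2*k) = 3" "(4::int) mod (2*k) = 4"
        "(5::int) mod (2*k) = 5" "(1::int) mod (2*k) = 1" using k4 by simp_all
      ultimately show False by (simp add: SDk X_def qact_def Qmult_def)
    qed
  qed
  show ?thesis using A B C D by blast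
qed


lemma main_iso:
  fixes n :: nat and m :: int
  assumes n3: "n \<ge> 3" and m1: "m \<ge> 1" and odd: "odd m"
  shows "Qgrp (2^(n-2)*m) \<cong> SDgrp m n 1 (-1)"
proof -
  define k where "k = (2::int)^(n-2)"
  define K where "K = k*m"
  have "(2::int)^1 \<le> 2^(n-2)" by (rule power_increasing) (use n3 in auto)
  then have k2: "k \<ge> 2" by (simp add: k_def)
  have Kpos: "K > 0" using k2 m1 by (simp add: K_def)
  obtain t where t0: "m = 2*t+1" using odd by (rule oddE)
  then have t: "m = 2*t+1" "t \<ge> 0" using m1 by auto
  have KK: "K = k + (2*k)*t" using t by (simp add: K_def algebra_simps)
  have modK1: "(x + K) mod m = x mod m" for x by (simp add: K_def)
  have modK2: "(x + K) mod (2*k) = (x + k) mod (2*k)" for x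
  proof -
    have "x + K = (x + k) + (2*k)*t" by (simp add: KK)
    then show ?thesis by (simp only: mod_mult_self2)
  qed
  have dvd1: "m dvd 2*K" by (simp add: K_def)
  have dvd2: "2*k dvd 2*K" by (simp add: K_def)
  define f where "f = (\<lambda>p::int\<times>int. (fst p mod m, (fst p mod (2*k), snd p)))"
  let ?Q = "Qgrp K" let ?G = "SDgrp m n 1 (-1)"
  have cQ: "carrier ?Q = {0..<2*K} \<times> {0..<2}" by (simp add: Qgrp_def)
  have cG: "carrier ?G = {0..<m} \<times> ({0..<2*k} \<times> {0..<2})" by (simp add: SDgrp_def Qgrp_def k_def)
  have SDk: "\<And>s t. SDmult m n 1 (-1) s t = ((fst s + qact 1 (-1) (snd s) * fst t) mod m, Qmult k (snd s) (snd t))"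
    by (simp add: SDmult_def k_def)
  have fhom: "f (Qmult K p q) = SDmult m n 1 (-1) (f p) (f q)"
    if "p \<in> carrier ?Q" "q \<in> carrier ?Q" for p q
  proof -
    obtain i1 j1 i2 j2 where pq: "p = (i1,j1)" "q = (i2,j2)" by (cases p, cases q)
    have "0 \<le> j1" "j1 < 2" "0 \<le> j2" "j2 < 2" using that pq cQ by auto
    then have j: "j1 = 0 \<or> j1 = 1" "j2 = 0 \<or> j2 = 1" by arith+
    have A: "(x mod (2*K)) mod m = x mod m" "(x mod (2*K)) mod (2*k) = x mod (2*k)" for x
      by (simp_all add: mod_mod_cancel[OF dvd1] mod_mod_cancel[OF dvd2])
    have P: "(x + y) mod M = (x mod M + y mod M) mod M" for x y M :: int by (simp add: mod_add_eq)
    have M: "(x - y) mod M = (x mod M - y mod M) mod M" for x y M :: int by (simp add: mod_diff_eq)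
    consider "j1 = 0" "j2 = 0" | "j1 = 0" "j2 = 1" | "j1 = 1" "j2 = 0" | "j1 = 1" "j2 = 1" using j by blast
    then show ?thesis
    proof cases
      case 1 then show ?thesis by (simp add: pq f_def SDk qact_def Qmult_def A mod_add_eq del: mod_add_eq[symmetric])
    next
      case 2 then show ?thesis by (simp add: pq f_def SDk qact_def Qmult_def A mod_add_eq del: mod_add_eq[symmetric])
    next
      case 3 then show ?thesis by (simp add: pq f_def SDk qact_def Qmult_def A mod_diff_eq diff_conv_add_uminus[symmetric])
    next
      case 4 
      have "(i1 - i2 + K) mod m = (i1 mod m - i2 mod m) mod m" using modK1 by (simp add: mod_diff_eq)
      moreover have "(i1 - i2 + K) mod (2*k) = (i1 mod (2*k) - i2 mod (2*k) + k) mod (2*k)"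
      proof -
        have "(i1 - i2 + K) mod (2*k) = (i1 - i2 + k) mod (2*k)" by (rule modK2)
        also have "\<dots> = ((i1 - i2) mod (2*k) + k) mod (2*k)" by (rule mod_add_left_eq[symmetric])
        also have "\<dots> = ((i1 mod (2*k) - i2 mod (2*k)) mod (2*k) + k) mod (2*k)" by (simp only: mod_diff_eq)
        also have "\<dots> = (i1 mod (2*k) - i2 mod (2*k) + k) mod (2*k)" by (rule mod_add_left_eq)
        finally show ?thesis .
      qed
      ultimately show ?thesis using 4 by (simp add: pq f_def SDk qact_def Qmult_def A diff_conv_add_uminus[symmetric])
    qed
  qed
  have fin: "inj_on f (carrier ?Q)"
  proof (rule inj_onI)
    fix p q assume pq: "p \<in> carrier ?Q" "q \<in> carrier ?Q" "f p = f q"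
    obtain i1 j1 i2 j2 where pq': "p = (i1,j1)" "q = (i2,j2)" by (cases p, cases q)
    have e: "j1 = j2" "[i1 = i2] (mod m)" "[i1 = i2] (mod 2*k)" using pq pq' by (auto simp: f_def cong_def)
    have "coprime m ((2::int)^Suc (n-2))" using odd by simp
    then have "coprime m (2*k)" by (simp add: k_def)
    then have "[i1 = i2] (mod m * (2*k))" using e coprime_cong_mult by blast
    then have "i1 = i2" using pq pq' cQ by (intro cong_less_imp_eq_int[of i1 "m*(2*k)"]) (auto simp: K_def algebra_simps)
    then show "p = q" using e pq' by simp
  qed
  have fsub: "f ` carrier ?Q \<subseteq> carrier ?G" using k2 m1 by (auto simp: f_def cQ cG)
  have c1: "card (carrier ?Q) = nat (2*K) * 2" by (simp add: cQ card_cartesian_product)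
  have c2: "card (carrier ?G) = nat m * (nat (2*k) * 2)" by (simp add: cG card_cartesian_product)
  have "nat (2*K) = nat m * nat (2*k)" using m1 k2
    by (simp add: K_def nat_mult_distrib[symmetric] algebra_simps)
  then have card: "card (carrier ?Q) = card (carrier ?G)" using c1 c2 by simp
  have fimg: "f ` carrier ?Q = carrier ?G"
  proof (rule card_subset_eq)
    show "finite (carrier ?G)" by (simp add: cG)
    show "f ` carrier ?Q \<subseteq> carrier ?G" by (rule fsub)
    show "card (f ` carrier ?Q) = card (carrier ?G)" using card card_image[OF fin] by simp
  qed
  have hm: "f \<in> hom ?Q ?G"
  proof (rule homI)
    fix x assume "x \<in> carrier ?Q" then show "f x \<in> carrier ?G" using fsub by blast
  next
    fix x y assume "x \<in> carrier ?Q" "y \<in> carrier ?Q"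
    then have "f (Qmult K x y) = SDmult m n 1 (-1) (f x) (f y)" by (rule fhom)
    then show "f (x \<otimes>\<^bsub>?Q\<^esub> y) = f x \<otimes>\<^bsub>?G\<^esub> f y" by (simp add: Qgrp_def SDgrp_def)
  qed
  have "f \<in> iso ?Q ?G" unfolding iso_def bij_betw_def using hm fin fimg by blast
  then show ?thesis unfolding is_iso_def K_def k_def by blast
qed



lemma SD_cong:
  assumes "[a = a'] (mod m)" "[b = b'] (mod m)"
  shows "SDgrp m n a b = SDgrp m n a' b'"
proof -
  have "SDmult m n a b = SDmult m n a' b'"
  proof (intro ext)
    fix s t :: "int \<times> int \<times> int"
    have "[fst s + qact a b (snd s) * fst t = fst s + qact a' b' (snd s) * fst t] (mod m)"
      unfolding qact_def using assms by (intro cong_add cong_mult cong_pow cong_refl)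
    then show "SDmult m n a b s t = SDmult m n a' b' s t" by (simp add: SDmult_def cong_def)
  qed
  then show ?thesis by (simp add: SDgrp_def)
qed

lemma C8_eq: "{0..<2*2::int} \<times> {0..<2::int} = {(0,0),(0,1),(1,0),(1,1),(2,0),(2,1),(3,0),(3,1)}"
proof -
  have "{0..<2*2::int} = {0,1,2,3}" by auto
  moreover have "{0..<2::int} = {0,1}" by auto
  ultimately show ?thesis by auto
qed

lemma SD_aut:
  fixes \<tau> :: "int\<times>int \<Rightarrow> int\<times>int" and m a b :: int
  assumes th: "\<And>p q. p \<in> {0..<2*2} \<times> {0..<2} \<Longrightarrow> q \<in> {0..<2*2} \<times> {0..<2} \<Longrightarrow> \<tau> (Qmult 2 p q) = Qmult 2 (\<tau> p) (\<tau> q)"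
    and tb: "bij_betw \<tau> ({0..<2*2} \<times> {0..<2}) ({0..<2*2} \<times> {0..<2})"
    and tq: "\<And>q. q \<in> {0..<2*2} \<times> {0..<2} \<Longrightarrow> qact a b (\<tau> q) = qact 1 (-1) q"
  shows "SDgrp m 3 1 (-1) \<cong> SDgrp m 3 a b"
proof -
  define C where "C = ({0..<2*2} \<times> {0..<2} :: (int\<times>int) set)"
  define F where "F = (\<lambda>s::int\<times>int\<times>int. (fst s, \<tau> (snd s)))"
  have c1: "carrier (SDgrp m 3 1 (-1)) = {0..<m} \<times> C" by (simp add: SDgrp_def Qgrp_def C_def)
  have c2: "carrier (SDgrp m 3 a b) = {0..<m} \<times> C" by (simp add: SDgrp_def Qgrp_def C_def)
  have tC: "\<tau> q \<in> C" if "q \<in> C" for q using tb that unfolding C_def bij_betw_def by blast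
  have hm: "F \<in> hom (SDgrp m 3 1 (-1)) (SDgrp m 3 a b)"
  proof (rule homI)
    fix x assume "x \<in> carrier (SDgrp m 3 1 (-1))" then show "F x \<in> carrier (SDgrp m 3 a b)"
      using tC by (auto simp: c1 c2 F_def)
  next
    fix x y assume xy: "x \<in> carrier (SDgrp m 3 1 (-1))" "y \<in> carrier (SDgrp m 3 1 (-1))"
    then have "snd x \<in> C" "snd y \<in> C" by (auto simp: c1)
    then show "F (x \<otimes>\<^bsub>SDgrp m 3 1 (-1)\<^esub> y) = F x \<otimes>\<^bsub>SDgrp m 3 a b\<^esub> F y"
      using th tq by (simp add: SDgrp_def SDmult_def F_def C_def)
  qed
  have inj: "inj_on F ({0..<m} \<times> C)"
  proof (rule inj_onI)
    fix x y assume "x \<in> {0..<m} \<times> C" "y \<in> {0..<m} \<times> C" "F x = F y"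
    then show "x = y" using tb unfolding F_def C_def bij_betw_def inj_on_def
      by (metis mem_Times_iff prod.collapse prod.inject)
  qed
  have img: "F ` ({0..<m} \<times> C) = {0..<m} \<times> C"
  proof
    show "F ` ({0..<m} \<times> C) \<subseteq> {0..<m} \<times> C" using tC by (auto simp: F_def)
  next
    show "{0..<m} \<times> C \<subseteq> F ` ({0..<m} \<times> C)"
    proof
      fix x assume x: "x \<in> {0..<m} \<times> C"
      then have "snd x \<in> \<tau> ` C" using tb unfolding bij_betw_def C_def by auto
      then obtain q where q: "q \<in> C" "snd x = \<tau> q" by blast
      then have "x = F (fst x, q)" by (cases x) (simp add: F_def)
      moreover have "(fst x, q) \<in> {0..<m} \<times> C" using x q by auto
      ultimately show "x \<in> F ` ({0..<m} \<times> C)" by blast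
    qed
  qed
  have "F \<in> iso (SDgrp m 3 1 (-1)) (SDgrp m 3 a b)"
    unfolding iso_def bij_betw_def using hm inj img c1 c2 by simp
  then show ?thesis unfolding is_iso_def by blast
qed

definition tau1 :: "int\<times>int \<Rightarrow> int\<times>int" where
  "tau1 p = (if p = (0,1) then (1,0) else if p = (1,0) then (0,1) else if p = (1,1) then (3,1)
     else if p = (2,1) then (3,0) else if p = (3,0) then (2,1) else if p = (3,1) then (1,1) else p)"

definition tau2 :: "int\<times>int \<Rightarrow> int\<times>int" where
  "tau2 p = (if p = (1,0) then (1,1) else if p = (1,1) then (3,0)
     else if p = (3,0) then (3,1) else if p = (3,1) then (1,0) else p)"

lemma SD_iso1: "SDgrp m 3 1 (-1) \<cong> SDgrp m 3 (-1) 1"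
proof (rule SD_aut)
  show "tau1 (Qmult 2 p q) = Qmult 2 (tau1 p) (tau1 q)"
    if "p \<in> {0..<2*2} \<times> {0..<2}" "q \<in> {0..<2*2} \<times> {0..<2}" for p q
    using that unfolding C8_eq by (elim insertE emptyE; simp add: tau1_def Qmult_def)
  show "bij_betw tau1 ({0..<2*2} \<times> {0..<2}) ({0..<2*2} \<times> {0..<2})"
    unfolding C8_eq bij_betw_def by (auto simp: tau1_def inj_on_def)
  show "qact (-1) 1 (tau1 q) = qact 1 (-1) q" if "q \<in> {0..<2*2} \<times> {0..<2}" for q
    using that unfolding C8_eq by (elim insertE emptyE; simp add: tau1_def qact_def)
qed

lemma SD_iso2: "SDgrp m 3 1 (-1) \<cong> SDgrp m 3 (-1) (-1)"
proof (rule SD_aut)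
  show "tau2 (Qmult 2 p q) = Qmult 2 (tau2 p) (tau2 q)"
    if "p \<in> {0..<2*2} \<times> {0..<2}" "q \<in> {0..<2*2} \<times> {0..<2}" for p q
    using that unfolding C8_eq by (elim insertE emptyE; simp add: tau2_def Qmult_def)
  show "bij_betw tau2 ({0..<2*2} \<times> {0..<2}) ({0..<2*2} \<times> {0..<2})"
    unfolding C8_eq bij_betw_def by (auto simp: tau2_def inj_on_def)
  show "qact (-1) (-1) (tau2 q) = qact 1 (-1) q" if "q \<in> {0..<2*2} \<times> {0..<2}" for q
    using that unfolding C8_eq by (elim insertE emptyE; simp add: tau2_def qact_def)
qed



theorem lemma1p8:
  fixes n :: nat and m a b :: int
  assumes "n \<ge> 3" and "m \<ge> 1" and "odd m"
    and "[a ^ 2 = 1] (mod m)" and "[b ^ 2 = 1] (mod m)"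
  shows "Qgrp (2 ^ (n - 2) * m) \<cong> SDgrp m n a b \<longleftrightarrow>
    ((n = 3 \<and> (([a = 1] (mod m) \<and> [b = -1] (mod m)) \<or>
               ([a = -1] (mod m) \<and> [b = 1] (mod m)) \<or>
               ([a = -1] (mod m) \<and> [b = -1] (mod m)))) \<or>
     (n \<ge> 4 \<and> [a = 1] (mod m) \<and> [b = -1] (mod m)))"
proof
  assume iso: "Qgrp (2 ^ (n - 2) * m) \<cong> SDgrp m n a b"
  have n34: "n = 3 \<or> n \<ge> 4" using assms(1) by arith
  show "(n = 3 \<and> (([a = 1] (mod m) \<and> [b = -1] (mod m)) \<or>
               ([a = -1] (mod m) \<and> [b = 1] (mod m)) \<or>
               ([a = -1] (mod m) \<and> [b = -1] (mod m)))) \<or>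
     (n \<ge> 4 \<and> [a = 1] (mod m) \<and> [b = -1] (mod m))"
  proof (cases "m = 1")
    case True
    then show ?thesis using n34 by (auto simp: cong_def)
  next
    case False
    then have m1: "m > 1" using assms(2) by simp
    have cm1: "[x = 1] (mod m) \<longleftrightarrow> x mod m = 1" for x using m1 by (simp add: cong_def)
    have cmm1: "[x = -1] (mod m) \<longleftrightarrow> (1+x) mod m = 0" for x
      by (simp add: cong_iff_dvd_diff dvd_eq_mod_eq_0 add.commute)
    obtain \<phi> where "\<phi> \<in> iso (Qgrp (2 ^ (n - 2) * m)) (SDgrp m n a b)" using iso unfolding is_iso_def by blast
    from fwd[OF assms(1) m1 assms(3) this] have F:
      "(a mod m = 1 \<or> (1+a) mod m = 0) \<and> (b mod m = 1 \<or> (1+b) mod m = 0)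
     \<and> \<not>(a mod m = 1 \<and> b mod m = 1) \<and> (n \<ge> 4 \<longrightarrow> (1+a) mod m \<noteq> 0)" .
    show ?thesis unfolding cm1 cmm1 using F n34 by (cases "n = 3") auto
  qed
next
  assume R: "(n = 3 \<and> (([a = 1] (mod m) \<and> [b = -1] (mod m)) \<or>
               ([a = -1] (mod m) \<and> [b = 1] (mod m)) \<or>
               ([a = -1] (mod m) \<and> [b = -1] (mod m)))) \<or>
     (n \<ge> 4 \<and> [a = 1] (mod m) \<and> [b = -1] (mod m))"
  have base: "Qgrp (2 ^ (n - 2) * m) \<cong> SDgrp m n 1 (-1)" using main_iso assms(1-3) by blast
  from R show "Qgrp (2 ^ (n - 2) * m) \<cong> SDgrp m n a b"
  proof (elim disjE conjE)
    assume "n = 3" "[a = 1] (mod m)" "[b = -1] (mod m)"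
    then show ?thesis using base SD_cong by metis
  next
    assume n: "n = 3" and ab: "[a = -1] (mod m)" "[b = 1] (mod m)"
    have "SDgrp m n a b = SDgrp m n (-1) 1" using SD_cong ab by metis
    then show ?thesis using iso_trans[OF base] SD_iso1 n by metis
  next
    assume n: "n = 3" and ab: "[a = -1] (mod m)" "[b = -1] (mod m)"
    have "SDgrp m n a b = SDgrp m n (-1) (-1)" using SD_cong ab by metis
    then show ?thesis using iso_trans[OF base] SD_iso2 n by metis
  next
    assume "4 \<le> n" "[a = 1] (mod m)" "[b = -1] (mod m)"
    then show ?thesis using base SD_cong by metis
  qed
qed


end
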